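(* For every $n\ge 2$, the number of permutations in $\mathcal{S}_{n,1}^{1\prec n}(1324)$ equals the number of $1324$-avoiding vertical dominoes with $n-2$ points; more precisely, there is an explicit bijection between these two sets.
   Context: $\mathcal{S}_n(1324)$ denotes the set of permutations of $\{1,\dots,n\}$ (written in one-line notation) that avoid the pattern $1324$. For $a,k\ge1$, $\mathcal{S}_{n,k}^{a\prec n}(1324)$ is the set of $\sigma\in\mathcal{S}_n(1324)$ such that $\sigma^{-1}(n)-\sigma^{-1}(a)=k$ and $\sigma^{-1}(b)>\sigma^{-1}(n)$ for every $b\in\{1,\dots,a-1\}$. Thus $\mathcal{S}_{n,1}^{1\prec n}(1324)$ consists of the $1324$-avoiding permutations in which the entry $1$ is immediately followed by the entry $n$. A $1324$-avoiding vertical domino with $m$ points is a pair $(\pi,h)$ where $\pi$ is a permutation of $\{1,\dots,m\}$ avoiding $1324$ and $h\in\{0,1,\dots,m\}$ is a horizontal cut such that the subsequence of $\pi$ formed by the values $\le h$ (the bottom cell) is order-isomorphic to a $132$-avoiding permutation and the subsequence formed by the values $>h$ (the top cell) is order-isomorphic to a $213$-avoiding permutation; two dominoes are different if they differ in $\pi$ or in $h$. *)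

theory Defs
  imports Main "HOL-Library.Sublist"
begin

definition perms :: "nat \<Rightarrow> nat list set" where
  "perms n = {xs. distinct xs \<and> set xs = {1..n}}"

definition order_iso :: "nat list \<Rightarrow> nat list \<Rightarrow> bool" where
  "order_iso xs ys \<longleftrightarrow> length xs = length ys \<and>
     (\<forall>i<length xs. \<forall>j<length xs. xs ! i < xs ! j \<longleftrightarrow> ys ! i < ys ! j)"

definition contains :: "nat list \<Rightarrow> nat list \<Rightarrow> bool" where
  "contains xs p \<longleftrightarrow> (\<exists>ys. subseq ys xs \<and> order_iso ys p)"

definition avoids :: "nat list \<Rightarrow> nat list \<Rightarrow> bool" where
  "avoids xs p \<longleftrightarrow> \<not> contains xs p"

definition Av1324 :: "nat \<Rightarrow> nat list set" where
  "Av1324 n = {\<sigma> \<in> perms n. avoids \<sigma> [1,3,2,4]}"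

text \<open>S_{n,k}^{a \<prec> n}(1324), positions 0-based (differences are unaffected).\<close>
definition S_prec :: "nat \<Rightarrow> nat \<Rightarrow> nat \<Rightarrow> nat list set" where
  "S_prec n k a = {\<sigma> \<in> Av1324 n. \<exists>i j. i < length \<sigma> \<and> j < length \<sigma> \<and>
      \<sigma> ! i = a \<and> \<sigma> ! j = n \<and> j = i + k \<and>
      (\<forall>b\<in>{1..<a}. \<forall>l<length \<sigma>. \<sigma> ! l = b \<longrightarrow> l > j)}"

definition dominoes :: "nat \<Rightarrow> (nat list \<times> nat) set" where
  "dominoes m = {(\<pi>, h). \<pi> \<in> Av1324 m \<and> h \<le> m \<and>
      (let bot = filter (\<lambda>v. v \<le> h) \<pi> in
         \<exists>\<tau>. \<tau> \<in> perms (length bot) \<and> avoids \<tau> [1,3,2] \<and> order_iso bot \<tau>) \<and>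
      (let top = filter (\<lambda>v. h < v) \<pi> in
         \<exists>\<tau>. \<tau> \<in> perms (length top) \<and> avoids \<tau> [2,1,3] \<and> order_iso top \<tau>)}"

end

theory Submission
  imports Defs
begin


lemma subseq_idx:
  "subseq ys xs \<longleftrightarrow> (\<exists>ix. sorted_wrt (<) ix \<and> (\<forall>i\<in>set ix. i < length xs) \<and> ys = map ((!) xs) ix)"
proof (induction xs arbitrary: ys)
  case Nil
  then show ?case by auto
next
  case (Cons x xs)
  show ?case
  proof
    assume "subseq ys (x # xs)"
    then consider (a) "subseq ys xs" | (b) ys' where "ys = x # ys'" "subseq ys' xs"
      by (cases ys) (auto split: if_splits)
    then show "\<exists>ix. sorted_wrt (<) ix \<and> (\<forall>i\<in>set ix. i < length (x#xs)) \<and> ys = map ((!) (x#xs)) ix"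
    proof cases
      case a
      then obtain ix where "sorted_wrt (<) ix" "\<forall>i\<in>set ix. i < length xs" "ys = map ((!) xs) ix"
        using Cons.IH by blast
      then show ?thesis
        by (intro exI[of _ "map Suc ix"]) (auto simp: sorted_wrt_map)
    next
      case b
      then obtain ix where "sorted_wrt (<) ix" "\<forall>i\<in>set ix. i < length xs" "ys' = map ((!) xs) ix"
        using Cons.IH by blast
      then show ?thesis using b
        by (intro exI[of _ "0 # map Suc ix"]) (auto simp: sorted_wrt_map)
    qed
  next
    assume "\<exists>ix. sorted_wrt (<) ix \<and> (\<forall>i\<in>set ix. i < length (x#xs)) \<and> ys = map ((!) (x#xs)) ix"
    then obtain ix where s: "sorted_wrt (<) ix" and b: "\<forall>i\<in>set ix. i < length (x#xs)"
      and y: "ys = map ((!) (x#xs)) ix" by blast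
    show "subseq ys (x # xs)"
    proof (cases "0 \<in> set ix")
      case True
      then obtain r where r: "ix = 0 # r"
        using s by (cases "ix") (auto)
      with s have pos: "\<forall>i\<in>set r. 0 < i" by auto
      define r' where "r' = map (\<lambda>i. i - 1) r"
      have rr: "r = map Suc r'" using pos unfolding r'_def by (induct r) auto
      have "sorted_wrt (<) r'" using s unfolding r rr by (auto simp: sorted_wrt_map)
      moreover have "\<forall>i\<in>set r'. i < length xs" using b unfolding r rr by auto
      ultimately have "subseq (map ((!) xs) r') xs" using Cons.IH by blast
      then show ?thesis using y unfolding r rr by (auto simp: comp_def)
    next
      case False
      define r' where "r' = map (\<lambda>i. i - 1) ix"
      have rr: "ix = map Suc r'" using False unfolding r'_def by (induct "ix") auto
      have "sorted_wrt (<) r'" using s unfolding rr by (auto simp: sorted_wrt_map)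
      moreover have "\<forall>i\<in>set r'. i < length xs" using b unfolding rr by auto
      ultimately have "subseq (map ((!) xs) r') xs" using Cons.IH by blast
      then show ?thesis using y unfolding rr by (auto simp: comp_def)
    qed
  qed
qed

lemma subseq_filter_iff: "subseq ys (filter Q xs) \<longleftrightarrow> subseq ys xs \<and> (\<forall>y\<in>set ys. Q y)"
proof
  assume a: "subseq ys (filter Q xs)"
  have "subseq ys xs" using a subseq_filter_left subseq_order.order_trans by blast
  moreover have "\<forall>y\<in>set ys. Q y" 
  proof
    fix y assume "y \<in> set ys"
    from list_emb_set[OF a this] show "Q y" by auto
  qed
  ultimately show "subseq ys xs \<and> (\<forall>y\<in>set ys. Q y)" by blast
next
  assume "subseq ys xs \<and> (\<forall>y\<in>set ys. Q y)"
  then show "subseq ys (filter Q xs)"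
    by (metis filter_True subseq_filter)
qed

lemma contains_filter:
  "contains (filter Q xs) p \<longleftrightarrow> (\<exists>ix. sorted_wrt (<) ix \<and> (\<forall>i\<in>set ix. i < length xs \<and> Q (xs ! i))
      \<and> order_iso (map ((!) xs) ix) p)"
  unfolding contains_def subseq_filter_iff
  unfolding subseq_idx by fastforce



lemma oi132: "order_iso [a,b,c::nat] [1,3,2] \<longleftrightarrow> a < c \<and> c < b"
  by (simp add: order_iso_def numeral_3_eq_3 All_less_Suc) linarith
lemma oi213: "order_iso [a,b,c::nat] [2,1,3] \<longleftrightarrow> b < a \<and> a < c"
  by (simp add: order_iso_def numeral_3_eq_3 All_less_Suc) linarith
lemma oi1324: "order_iso [a,b,c,d::nat] [1,3,2,4] \<longleftrightarrow> a < c \<and> c < b \<and> b < d"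
  by (simp add: order_iso_def eval_nat_numeral All_less_Suc) linarith

lemma len3: "length ys = 3 \<Longrightarrow> \<exists>a b c. ys = [a,b,c]"
  by (auto simp: numeral_3_eq_3 length_Suc_conv)
lemma len4: "length ys = 4 \<Longrightarrow> \<exists>a b c d. ys = [a,b,c,d]"
  by (auto simp: eval_nat_numeral length_Suc_conv)

lemma sorted3: "sorted_wrt (<) [i,j,k::nat] \<longleftrightarrow> i<j \<and> j<k" by auto
lemma sorted4: "sorted_wrt (<) [i,j,k,l::nat] \<longleftrightarrow> i<j \<and> j<k \<and> k<l" by auto

definition c132 :: "(nat \<Rightarrow> bool) \<Rightarrow> nat list \<Rightarrow> bool" where
  "c132 Q xs \<longleftrightarrow> (\<exists>i j k. i < j \<and> j < k \<and> k < length xs \<and> Q (xs!i) \<and> Q (xs!j) \<and> Q (xs!k)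
      \<and> xs!i < xs!k \<and> xs!k < xs!j)"
definition c213 :: "(nat \<Rightarrow> bool) \<Rightarrow> nat list \<Rightarrow> bool" where
  "c213 Q xs \<longleftrightarrow> (\<exists>i j k. i < j \<and> j < k \<and> k < length xs \<and> Q (xs!i) \<and> Q (xs!j) \<and> Q (xs!k)
      \<and> xs!j < xs!i \<and> xs!i < xs!k)"
definition c1324 :: "nat list \<Rightarrow> bool" where
  "c1324 xs \<longleftrightarrow> (\<exists>i j k l. i < j \<and> j < k \<and> k < l \<and> l < length xs
      \<and> xs!i < xs!k \<and> xs!k < xs!j \<and> xs!j < xs!l)"

lemma contains132: "contains (filter Q xs) [1,3,2] \<longleftrightarrow> c132 Q xs"
proof
  assume "contains (filter Q xs) [1,3,2]"
  then obtain ix where s: "sorted_wrt (<) ix" and b: "\<forall>i\<in>set ix. i < length xs \<and> Q (xs ! i)"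
      and o: "order_iso (map ((!) xs) ix) [1,3,2]" unfolding contains_filter by blast
  have "length ix = 3" using o by (simp add: order_iso_def)
  then obtain i j k where ix: "ix = [i,j,k]" using len3 by blast
  have "xs!i < xs!k \<and> xs!k < xs!j" using o unfolding ix list.map oi132 .
  then show "c132 Q xs" using s b unfolding ix c132_def by auto
next
  assume "c132 Q xs"
  then obtain i j k where "i < j \<and> j < k \<and> k < length xs \<and> Q (xs!i) \<and> Q (xs!j) \<and> Q (xs!k)
      \<and> xs!i < xs!k \<and> xs!k < xs!j" unfolding c132_def by blast
  then show "contains (filter Q xs) [1,3,2]" unfolding contains_filter
    by (intro exI[of _ "[i,j,k]"]) (auto simp only: oi132 list.map sorted3, auto)
qed

lemma contains213: "contains (filter Q xs) [2,1,3] \<longleftrightarrow> c213 Q xs"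
proof
  assume "contains (filter Q xs) [2,1,3]"
  then obtain ix where s: "sorted_wrt (<) ix" and b: "\<forall>i\<in>set ix. i < length xs \<and> Q (xs ! i)"
      and o: "order_iso (map ((!) xs) ix) [2,1,3]" unfolding contains_filter by blast
  have "length ix = 3" using o by (simp add: order_iso_def)
  then obtain i j k where ix: "ix = [i,j,k]" using len3 by blast
  have "xs!j < xs!i \<and> xs!i < xs!k" using o unfolding ix list.map oi213 .
  then show "c213 Q xs" using s b unfolding ix c213_def by auto
next
  assume "c213 Q xs"
  then obtain i j k where "i < j \<and> j < k \<and> k < length xs \<and> Q (xs!i) \<and> Q (xs!j) \<and> Q (xs!k)
      \<and> xs!j < xs!i \<and> xs!i < xs!k" unfolding c213_def by blast
  then show "contains (filter Q xs) [2,1,3]" unfolding contains_filter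
    by (intro exI[of _ "[i,j,k]"]) (auto simp only: oi213 list.map sorted3, auto)
qed

lemma contains1324: "contains xs [1,3,2,4] \<longleftrightarrow> c1324 xs"
proof
  assume "contains xs [1,3,2,4]"
  then have "contains (filter (\<lambda>_. True) xs) [1,3,2,4]" by simp
  then obtain ix where s: "sorted_wrt (<) ix" and b: "\<forall>i\<in>set ix. i < length xs"
      and o: "order_iso (map ((!) xs) ix) [1,3,2,4]" unfolding contains_filter by blast
  have "length ix = 4" using o by (simp add: order_iso_def)
  then obtain i j k l where ix: "ix = [i,j,k,l]" using len4 by blast
  have "xs!i < xs!k \<and> xs!k < xs!j \<and> xs!j < xs!l" using o unfolding ix list.map oi1324 .
  then show "c1324 xs" using s b unfolding ix c1324_def by auto
next
  assume "c1324 xs"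
  then obtain i j k l where "i < j \<and> j < k \<and> k < l \<and> l < length xs
      \<and> xs!i < xs!k \<and> xs!k < xs!j \<and> xs!j < xs!l" unfolding c1324_def by blast
  then have "contains (filter (\<lambda>_. True) xs) [1,3,2,4]" unfolding contains_filter
    by (intro exI[of _ "[i,j,k,l]"]) (auto simp only: oi1324 list.map sorted4, auto)
  then show "contains xs [1,3,2,4]" by simp
qed



lemma oi_sym: "order_iso xs ys \<Longrightarrow> order_iso ys xs"
  unfolding order_iso_def by auto
lemma oi_trans: "order_iso xs ys \<Longrightarrow> order_iso ys zs \<Longrightarrow> order_iso xs zs"
  unfolding order_iso_def by auto

lemma oi_map: "order_iso xs ys \<Longrightarrow> \<forall>i\<in>set ix. i < length xs \<Longrightarrow>
   order_iso (map ((!) xs) ix) (map ((!) ys) ix)"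
  unfolding order_iso_def by auto

lemma oi_contains: assumes "order_iso xs ys" shows "contains xs p \<longleftrightarrow> contains ys p"
proof -
  have l: "length xs = length ys" using assms by (simp add: order_iso_def)
  have "contains (filter (\<lambda>_. True) xs) p \<longleftrightarrow> contains (filter (\<lambda>_. True) ys) p"
    unfolding contains_filter
  proof (intro iffI; elim exE conjE)
    fix ix assume "sorted_wrt (<) ix" "\<forall>i\<in>set ix. i < length xs \<and> True" "order_iso (map ((!) xs) ix) p"
    then show "\<exists>ix. sorted_wrt (<) ix \<and> (\<forall>i\<in>set ix. i < length ys \<and> True) \<and> order_iso (map ((!) ys) ix) p"
      using oi_map[OF assms, of ix] l oi_sym oi_trans by (metis (no_types, lifting))
  next
    fix ix assume "sorted_wrt (<) ix" "\<forall>i\<in>set ix. i < length ys \<and> True" "order_iso (map ((!) ys) ix) p"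
    then show "\<exists>ix. sorted_wrt (<) ix \<and> (\<forall>i\<in>set ix. i < length xs \<and> True) \<and> order_iso (map ((!) xs) ix) p"
      using oi_map[OF assms, of ix] l oi_trans by (metis (no_types, lifting))
  qed
  then show ?thesis by simp
qed

lemma std_exists:
  fixes xs :: "nat list"
  assumes d: "distinct xs"
  shows "\<exists>\<tau>. \<tau> \<in> perms (length xs) \<and> order_iso xs \<tau>"
proof -
  define r where "r x = card {y\<in>set xs. y \<le> x}" for x
  have mono: "r x < r z" if "x \<in> set xs" "z \<in> set xs" "x < z" for x z
  proof -
    have "{y\<in>set xs. y \<le> x} \<subseteq> {y\<in>set xs. y \<le> z}" "z \<in> {y\<in>set xs. y \<le> z}" "z \<notin> {y\<in>set xs. y \<le> x}"
      using that by auto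
    then have "{y\<in>set xs. y \<le> x} \<subset> {y\<in>set xs. y \<le> z}" by blast
    then show ?thesis unfolding r_def by (intro psubset_card_mono) auto
  qed
  have iff: "r x < r z \<longleftrightarrow> x < z" if "x \<in> set xs" "z \<in> set xs" for x z
    using mono[OF that] mono[OF that(2,1)] by (cases x z rule: linorder_cases) auto
  have inj: "inj_on r (set xs)"
  proof (rule inj_onI)
    fix x z assume "x \<in> set xs" "z \<in> set xs" "r x = r z"
    then show "x = z" using mono[of x z] mono[of z x] by (cases x z rule: linorder_cases) auto
  qed
  define \<tau> where "\<tau> = map r xs"
  have dt: "distinct \<tau>" unfolding \<tau>_def using d inj by (simp add: distinct_map)
  have sub: "set \<tau> \<subseteq> {1..length xs}"
  proof
    fix v assume "v \<in> set \<tau>"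
    then obtain x where x: "x \<in> set xs" "v = r x" unfolding \<tau>_def by auto
    have "x \<in> {y\<in>set xs. y \<le> x}" using x by auto
    then have "card {y\<in>set xs. y \<le> x} > 0" by (intro card_gt_0_iff[THEN iffD2]) auto
    then have "r x \<ge> 1" unfolding r_def by simp
    moreover have "r x \<le> card (set xs)" unfolding r_def by (rule card_mono) auto
    ultimately show "v \<in> {1..length xs}" using x d by (simp add: distinct_card)
  qed
  have "card (set \<tau>) = length xs" using dt distinct_card[OF dt] by (simp add: \<tau>_def)
  then have "set \<tau> = {1..length xs}" using sub by (intro card_subset_eq) auto
  moreover have "order_iso xs \<tau>" unfolding order_iso_def \<tau>_def
    using iff[OF nth_mem nth_mem] by simp
  ultimately show ?thesis using dt unfolding perms_def by auto
qed

lemma perms_distinct: "\<pi> \<in> perms m \<Longrightarrow> distinct \<pi>" by (simp add: perms_def)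
lemma perms_length: "\<pi> \<in> perms m \<Longrightarrow> length \<pi> = m"
proof -
  assume "\<pi> \<in> perms m"
  then have "distinct \<pi>" "set \<pi> = {1..m}" by (auto simp: perms_def)
  then show ?thesis using distinct_card[of \<pi>] by simp
qed

lemma cell_iff:
  assumes "distinct (\<pi>::nat list)" and "contains (filter Q \<pi>) p \<longleftrightarrow> C"
  shows "(\<exists>\<tau>. \<tau> \<in> perms (length (filter Q \<pi>)) \<and> avoids \<tau> p \<and> order_iso (filter Q \<pi>) \<tau>) \<longleftrightarrow> \<not> C"
proof -
  obtain \<tau>0 where t0: "\<tau>0 \<in> perms (length (filter Q \<pi>))" "order_iso (filter Q \<pi>) \<tau>0"
    using std_exists[of "filter Q \<pi>"] assms(1) by auto
  show ?thesis
  proof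
    assume "\<exists>\<tau>. \<tau> \<in> perms (length (filter Q \<pi>)) \<and> avoids \<tau> p \<and> order_iso (filter Q \<pi>) \<tau>"
    then obtain \<tau> where "avoids \<tau> p" "order_iso (filter Q \<pi>) \<tau>" by blast
    then show "\<not> C" using oi_contains assms(2) unfolding avoids_def by blast
  next
    assume "\<not> C"
    then have "avoids \<tau>0 p" using oi_contains[OF t0(2)] assms(2) unfolding avoids_def by blast
    then show "\<exists>\<tau>. \<tau> \<in> perms (length (filter Q \<pi>)) \<and> avoids \<tau> p \<and> order_iso (filter Q \<pi>) \<tau>"
      using t0 by blast
  qed
qed

lemma Av_alt: "Av1324 n = {\<sigma>\<in>perms n. \<not> c1324 \<sigma>}"
  unfolding Av1324_def avoids_def contains1324 ..

lemma dominoes_alt: "dominoes m = {(\<pi>,h). \<pi>\<in>perms m \<and> \<not> c1324 \<pi> \<and> h \<le> m \<and>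
   \<not> c132 (\<lambda>v. v \<le> h) \<pi> \<and> \<not> c213 (\<lambda>v. h < v) \<pi>}"
proof -
  have A: "\<pi>\<in>perms m \<Longrightarrow> (\<exists>\<tau>. \<tau> \<in> perms (length (filter (\<lambda>v. v \<le> h) \<pi>)) \<and> avoids \<tau> [1,3,2] \<and> order_iso (filter (\<lambda>v. v \<le> h) \<pi>) \<tau>) \<longleftrightarrow> \<not> c132 (\<lambda>v. v \<le> h) \<pi>"
    for \<pi> h by (rule cell_iff[OF perms_distinct contains132])
  have B: "\<pi>\<in>perms m \<Longrightarrow> (\<exists>\<tau>. \<tau> \<in> perms (length (filter (\<lambda>v. h < v) \<pi>)) \<and> avoids \<tau> [2,1,3] \<and> order_iso (filter (\<lambda>v. h < v) \<pi>) \<tau>) \<longleftrightarrow> \<not> c213 (\<lambda>v. h < v) \<pi>"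
    for \<pi> h by (rule cell_iff[OF perms_distinct contains213])
  show ?thesis
  proof (rule set_eqI, clarify)
    fix \<pi> h
    show "((\<pi>, h) \<in> dominoes m) = ((\<pi>, h) \<in> {(\<pi>,h). \<pi>\<in>perms m \<and> \<not> c1324 \<pi> \<and> h \<le> m \<and>
   \<not> c132 (\<lambda>v. v \<le> h) \<pi> \<and> \<not> c213 (\<lambda>v. h < v) \<pi>})"
    proof (cases "\<pi> \<in> perms m")
      case True
      show ?thesis unfolding dominoes_def Av_alt Let_def mem_Collect_eq case_prod_conv
        unfolding A[OF True] B[OF True] using True by simp
    next
      case False
      show ?thesis unfolding dominoes_def Av_alt using False by simp

    qed
  qed
qed

lemma S_alt: "S_prec n 1 1 = {\<sigma>\<in>perms n. \<not> c1324 \<sigma> \<and> (\<exists>i. i + 1 < length \<sigma> \<and> \<sigma>!i = 1 \<and> \<sigma>!(i+1) = n)}"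
proof (rule set_eqI)
  fix \<sigma>
  show "\<sigma> \<in> S_prec n 1 1 \<longleftrightarrow> \<sigma> \<in> {\<sigma>\<in>perms n. \<not> c1324 \<sigma> \<and> (\<exists>i. i + 1 < length \<sigma> \<and> \<sigma>!i = 1 \<and> \<sigma>!(i+1) = n)}"
    unfolding S_prec_def Av_alt mem_Collect_eq
    apply simp
    using Suc_lessD by blast
qed



definition pos :: "nat list \<Rightarrow> nat \<Rightarrow> nat" where
  "pos xs v = (THE i. i < length xs \<and> xs ! i = v)"

definition invl :: "nat list \<Rightarrow> nat list" where
  "invl xs = map (\<lambda>y. Suc (pos xs (Suc y))) [0..<length xs]"

lemma pos_nth: "distinct xs \<Longrightarrow> i < length xs \<Longrightarrow> pos xs (xs ! i) = i"
  unfolding pos_def by (rule the_equality) (auto simp: nth_eq_iff_index_eq)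

lemma pos_mem: "distinct xs \<Longrightarrow> v \<in> set xs \<Longrightarrow> pos xs v < length xs \<and> xs ! pos xs v = v"
  by (metis in_set_conv_nth pos_nth)

lemma invl_len[simp]: "length (invl xs) = length xs"
  by (simp add: invl_def)

lemma invl_nth: "y < length xs \<Longrightarrow> invl xs ! y = Suc (pos xs (Suc y))"
  by (simp add: invl_def)

lemma perm_val: "xs \<in> perms m \<Longrightarrow> i < m \<Longrightarrow> 1 \<le> xs ! i \<and> xs ! i \<le> m"
proof -
  assume a: "xs \<in> perms m" "i < m"
  then have "xs ! i \<in> set xs" using perms_length[OF a(1)] by simp
  then show ?thesis using a(1) by (auto simp: perms_def)
qed

lemma invl_facts:
  assumes p: "xs \<in> perms m"
  shows "(\<forall>x<m. invl xs ! (xs ! x - 1) = Suc x) \<and> (\<forall>y<m. xs ! (invl xs ! y - 1) = Suc y)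
         \<and> (\<forall>y<m. 1 \<le> invl xs ! y \<and> invl xs ! y \<le> m)"
proof -
  have d: "distinct xs" and s: "set xs = {1..m}" and l: "length xs = m"
    using p perms_length[OF p] by (auto simp: perms_def)
  have 1: "invl xs ! (xs ! x - 1) = Suc x" if "x < m" for x
  proof -
    have "1 \<le> xs ! x" "xs ! x \<le> m" using perm_val[OF p that] by auto
    then have "invl xs ! (xs ! x - 1) = Suc (pos xs (xs ! x))"
      using invl_nth[of "xs ! x - 1" xs] l by simp
    then show ?thesis using pos_nth[OF d] that l by simp
  qed
  have 2: "xs ! (invl xs ! y - 1) = Suc y \<and> 1 \<le> invl xs ! y \<and> invl xs ! y \<le> m" if "y < m" for y
  proof -
    have "Suc y \<in> set xs" using s that by auto
    then have "pos xs (Suc y) < m" "xs ! pos xs (Suc y) = Suc y" using pos_mem[OF d] l by auto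
    then show ?thesis using invl_nth[of y xs] l that by simp
  qed
  show ?thesis using 1 2 by blast
qed

lemma invl_perm: assumes p: "xs \<in> perms m" shows "invl xs \<in> perms m"
proof -
  have l: "length xs = m" using perms_length[OF p] .
  note f = invl_facts[OF p]
  have d: "distinct (invl xs)"
  proof (subst distinct_conv_nth, intro allI impI)
    fix i j assume "i < length (invl xs)" "j < length (invl xs)" "i \<noteq> j"
    then show "invl xs ! i \<noteq> invl xs ! j" using f l by (metis Suc_inject invl_len)
  qed
  have "set (invl xs) \<subseteq> {1..m}" using f l by (auto simp: in_set_conv_nth)
  moreover have "card (set (invl xs)) = m" using distinct_card[OF d] l by simp
  ultimately have "set (invl xs) = {1..m}" by (intro card_subset_eq) auto
  then show ?thesis using d by (simp add: perms_def)
qed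

lemma invl_invl: assumes p: "xs \<in> perms m" shows "invl (invl xs) = xs"
proof -
  have l: "length xs = m" using perms_length[OF p] .
  have p2: "invl xs \<in> perms m" using invl_perm[OF p] .
  note f = invl_facts[OF p] and f2 = invl_facts[OF p2]
  show ?thesis
  proof (rule nth_equalityI)
    show "length (invl (invl xs)) = length xs" by simp
    fix y assume y: "y < length (invl (invl xs))"
    then have ym: "y < m" using l by simp
    have v: "1 \<le> xs ! y" "xs ! y \<le> m" using perm_val[OF p ym] by auto
    have "invl (invl xs) ! (invl xs ! (xs ! y - 1) - 1) = Suc (xs ! y - 1)"
      using f2 v by simp
    moreover have "invl xs ! (xs ! y - 1) = Suc y" using f ym by blast
    ultimately show "invl (invl xs) ! y = xs ! y" using v by simp
  qed
qed

lemma c1324_invl: assumes p: "xs \<in> perms m" and c: "c1324 xs" shows "c1324 (invl xs)"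
proof -
  have l: "length xs = m" using perms_length[OF p] .
  note f = invl_facts[OF p]
  obtain i j k q where o: "i < j" "j < k" "k < q" "q < m" "xs!i < xs!k" "xs!k < xs!j" "xs!j < xs!q"
    using c l unfolding c1324_def by blast
  have v: "1 \<le> xs!i" "1 \<le> xs!k" "xs!q \<le> m" using perm_val[OF p] o by auto
  show ?thesis unfolding c1324_def
    apply (rule exI[of _ "xs!i - 1"], rule exI[of _ "xs!k - 1"], rule exI[of _ "xs!j - 1"], rule exI[of _ "xs!q - 1"])
    using o v f l by auto
qed

lemma c1324_invl_iff: assumes p: "xs \<in> perms m" shows "c1324 (invl xs) \<longleftrightarrow> c1324 xs"
  using c1324_invl[OF p] c1324_invl[OF invl_perm[OF p]] invl_invl[OF p] by metis

lemma bot_iff: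
  assumes p: "xs \<in> perms m" and hm: "h \<le> m"
  shows "c132 (\<lambda>v. v \<le> h) xs \<longleftrightarrow>
    (\<exists>a b c. a < b \<and> b < c \<and> c < h \<and> invl xs ! a < invl xs ! c \<and> invl xs ! c < invl xs ! b)"
proof -
  have l: "length xs = m" using perms_length[OF p] .
  note f = invl_facts[OF p]
  show ?thesis
  proof
    assume "c132 (\<lambda>v. v \<le> h) xs"
    then obtain i j k where o: "i < j" "j < k" "k < m" "xs!i \<le> h" "xs!j \<le> h" "xs!k \<le> h"
       "xs!i < xs!k" "xs!k < xs!j" using l unfolding c132_def by blast
    have v: "1 \<le> xs!i" "1 \<le> xs!k" "1 \<le> xs!j" using perm_val[OF p] o by auto
    show "\<exists>a b c. a < b \<and> b < c \<and> c < h \<and> invl xs ! a < invl xs ! c \<and> invl xs ! c < invl xs ! b"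
      apply (rule exI[of _ "xs!i - 1"], rule exI[of _ "xs!k - 1"], rule exI[of _ "xs!j - 1"])
      using o v f by auto
  next
    assume "\<exists>a b c. a < b \<and> b < c \<and> c < h \<and> invl xs ! a < invl xs ! c \<and> invl xs ! c < invl xs ! b"
    then obtain a b c where o: "a < b" "b < c" "c < h" "invl xs ! a < invl xs ! c" "invl xs ! c < invl xs ! b"
      by blast
    have v: "1 \<le> invl xs!a" "1 \<le> invl xs!b" "1 \<le> invl xs!c" "invl xs ! a \<le> m" "invl xs ! b \<le> m" "invl xs ! c \<le> m"
      using f o hm by auto
    have e: "xs!(invl xs!a - 1) = Suc a" "xs!(invl xs!b - 1) = Suc b" "xs!(invl xs!c - 1) = Suc c"
      using f o hm by auto
    show "c132 (\<lambda>v. v \<le> h) xs" unfolding c132_def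
      apply (rule exI[of _ "invl xs!a - 1"], rule exI[of _ "invl xs!c - 1"], rule exI[of _ "invl xs!b - 1"])
      using o v e hm l by auto
  qed
qed

lemma top_iff:
  assumes p: "xs \<in> perms m" and hm: "h \<le> m"
  shows "c213 (\<lambda>v. h < v) xs \<longleftrightarrow>
    (\<exists>a b c. h \<le> a \<and> a < b \<and> b < c \<and> c < m \<and> invl xs ! b < invl xs ! a \<and> invl xs ! a < invl xs ! c)"
proof -
  have l: "length xs = m" using perms_length[OF p] .
  note f = invl_facts[OF p]
  show ?thesis
  proof
    assume "c213 (\<lambda>v. h < v) xs"
    then obtain i j k where o: "i < j" "j < k" "k < m" "h < xs!i" "h < xs!j" "h < xs!k"
       "xs!j < xs!i" "xs!i < xs!k" using l unfolding c213_def by blast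
    have v: "1 \<le> xs!i" "1 \<le> xs!k" "1 \<le> xs!j" "xs!k \<le> m" using perm_val[OF p] o by auto
    show "\<exists>a b c. h \<le> a \<and> a < b \<and> b < c \<and> c < m \<and> invl xs ! b < invl xs ! a \<and> invl xs ! a < invl xs ! c"
      apply (rule exI[of _ "xs!j - 1"], rule exI[of _ "xs!i - 1"], rule exI[of _ "xs!k - 1"])
      using o v f by auto
  next
    assume "\<exists>a b c. h \<le> a \<and> a < b \<and> b < c \<and> c < m \<and> invl xs ! b < invl xs ! a \<and> invl xs ! a < invl xs ! c"
    then obtain a b c where o: "h \<le> a" "a < b" "b < c" "c < m" "invl xs ! b < invl xs ! a" "invl xs ! a < invl xs ! c"
      by blast
    have v: "1 \<le> invl xs!a" "1 \<le> invl xs!b" "1 \<le> invl xs!c" "invl xs ! a \<le> m" "invl xs ! b \<le> m" "invl xs ! c \<le> m"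
      using f o by auto
    have e: "xs!(invl xs!a - 1) = Suc a" "xs!(invl xs!b - 1) = Suc b" "xs!(invl xs!c - 1) = Suc c"
      using f o by auto
    show "c213 (\<lambda>v. h < v) xs" unfolding c213_def
      apply (rule exI[of _ "invl xs!b - 1"], rule exI[of _ "invl xs!a - 1"], rule exI[of _ "invl xs!c - 1"])
      using o v e l by auto
  qed
qed



definition glue :: "nat \<Rightarrow> nat list \<Rightarrow> nat list" where
  "glue h \<rho> = map Suc (take h \<rho>) @ [1, Suc (Suc (length \<rho>))] @ map Suc (drop h \<rho>)"

lemma glue_len[simp]: "h \<le> length \<rho> \<Longrightarrow> length (glue h \<rho>) = length \<rho> + 2"
  by (simp add: glue_def)

lemma glue_lt: "x < h \<Longrightarrow> h \<le> length \<rho> \<Longrightarrow> glue h \<rho> ! x = Suc (\<rho> ! x)"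
  by (simp add: glue_def nth_append)
lemma glue_h: "h \<le> length \<rho> \<Longrightarrow> glue h \<rho> ! h = 1"
  by (simp add: glue_def nth_append)
lemma glue_h1: "h \<le> length \<rho> \<Longrightarrow> glue h \<rho> ! Suc h = Suc (Suc (length \<rho>))"
  by (simp add: glue_def nth_append)
lemma glue_gt: "h + 2 \<le> x \<Longrightarrow> x < length \<rho> + 2 \<Longrightarrow> h \<le> length \<rho> \<Longrightarrow> glue h \<rho> ! x = Suc (\<rho> ! (x - 2))"
  by (simp add: glue_def nth_append)

lemma glue_d: "x < length \<rho> + 2 \<Longrightarrow> x \<noteq> h \<Longrightarrow> x \<noteq> Suc h \<Longrightarrow> h \<le> length \<rho> \<Longrightarrow>
   glue h \<rho> ! x = Suc (\<rho> ! (if x < h then x else x - 2)) \<and> (if x < h then x else x - 2) < length \<rho>"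
  using glue_lt[of x h \<rho>] glue_gt[of h x \<rho>] by auto

lemma glue_perm:
  assumes p: "\<rho> \<in> perms m" and hm: "h \<le> m"
  shows "glue h \<rho> \<in> perms (Suc (Suc m))"
proof -
  have l: "length \<rho> = m" using perms_length[OF p] .
  have d: "distinct \<rho>" and s: "set \<rho> = {1..m}" using p by (auto simp: perms_def)
  have st: "set (take h \<rho>) \<subseteq> {1..m}" "set (drop h \<rho>) \<subseteq> {1..m}"
    using s set_take_subset set_drop_subset by metis+
  have "distinct (map Suc \<rho>)" using d by (simp add: distinct_map)
  moreover have "map Suc \<rho> = map Suc (take h \<rho>) @ map Suc (drop h \<rho>)"
    by (metis append_take_drop_id map_append)
  ultimately have dd: "distinct (map Suc (take h \<rho>) @ map Suc (drop h \<rho>))" by simp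
  have "distinct (glue h \<rho>)"
    unfolding glue_def using dd st l by (auto simp: distinct_map)
  moreover have "set (glue h \<rho>) = {1..Suc (Suc m)}"
  proof -
    have "set (glue h \<rho>) = {1, Suc (Suc m)} \<union> Suc ` (set (take h \<rho>) \<union> set (drop h \<rho>))"
      unfolding glue_def using l by auto
    also have "set (take h \<rho>) \<union> set (drop h \<rho>) = {1..m}"
      using s by (metis set_append append_take_drop_id)
    also have "{1, Suc (Suc m)} \<union> Suc ` {1..m} = {1..Suc (Suc m)}"
    proof -
      have "Suc ` {1..m} = {2..Suc m}" by (simp add: image_Suc_atLeastAtMost)
      then show ?thesis by auto
    qed
    finally show ?thesis .
  qed
  ultimately show ?thesis by (simp add: perms_def)
qed

definition P132 :: "nat \<Rightarrow> nat list \<Rightarrow> bool" where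
  "P132 h \<rho> \<longleftrightarrow> (\<exists>a b c. a < b \<and> b < c \<and> c < h \<and> \<rho> ! a < \<rho> ! c \<and> \<rho> ! c < \<rho> ! b)"
definition P213 :: "nat \<Rightarrow> nat list \<Rightarrow> bool" where
  "P213 h \<rho> \<longleftrightarrow> (\<exists>a b c. h \<le> a \<and> a < b \<and> b < c \<and> c < length \<rho> \<and> \<rho> ! b < \<rho> ! a \<and> \<rho> ! a < \<rho> ! c)"

lemma glue_c1324:
  assumes p: "\<rho> \<in> perms m" and hm: "h \<le> m"
  shows "c1324 (glue h \<rho>) \<longleftrightarrow> c1324 \<rho> \<or> P132 h \<rho> \<or> P213 h \<rho>"
proof -
  have l: "length \<rho> = m" using perms_length[OF p] .
  have bnd: "1 \<le> \<rho> ! y \<and> \<rho> ! y \<le> m" if "y < m" for y using perm_val[OF p that] .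
  define \<sigma> where "\<sigma> = glue h \<rho>"
  have ls: "length \<sigma> = m + 2" unfolding \<sigma>_def using l hm by simp
  have sh: "\<sigma> ! h = 1" unfolding \<sigma>_def using glue_h hm l by simp
  have sh1: "\<sigma> ! Suc h = m + 2" unfolding \<sigma>_def using glue_h1[of h \<rho>] hm l by simp
  have sv: "1 \<le> \<sigma> ! x \<and> \<sigma> ! x \<le> m + 2" if "x < m + 2" for x
  proof -
    have "\<sigma> \<in> perms (Suc (Suc m))" unfolding \<sigma>_def by (rule glue_perm[OF p hm])
    then show ?thesis using perm_val that by fastforce
  qed
  define e where "e x = (if x < h then x else x - 2)" for x
  have sd: "\<sigma> ! x = Suc (\<rho> ! e x) \<and> e x < m" if "x < m + 2" "x \<noteq> h" "x \<noteq> Suc h" for x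
    unfolding \<sigma>_def e_def using glue_d[of x \<rho> h] that l hm by simp
  have emono: "e x < e y" if "x < y" "x \<noteq> h" "x \<noteq> Suc h" "y \<noteq> h" "y \<noteq> Suc h" for x y
    unfolding e_def using that by auto
  show ?thesis
  proof
    assume "c1324 (glue h \<rho>)"
    then obtain i j k q where o: "i < j" "j < k" "k < q" "q < m + 2" "\<sigma>!i < \<sigma>!k" "\<sigma>!k < \<sigma>!j" "\<sigma>!j < \<sigma>!q"
      unfolding c1324_def \<sigma>_def[symmetric] ls by blast
    have vi: "1 \<le> \<sigma> ! i" using sv o by simp
    have vq: "\<sigma> ! q \<le> m + 2" using sv o by simp
    have nj: "j \<noteq> h" "k \<noteq> h" "q \<noteq> h" using sh vi o by auto
    have nj1: "j \<noteq> Suc h" "k \<noteq> Suc h" "i \<noteq> Suc h" using sh1 vq o by auto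
    consider (A) "i = h" | (B) "q = Suc h" | (C) "i \<noteq> h" "q \<noteq> Suc h" by blast
    then show "c1324 \<rho> \<or> P132 h \<rho> \<or> P213 h \<rho>"
    proof cases
      case A
      then have g: "h + 2 \<le> j" "h + 2 \<le> k" "h + 2 \<le> q" using o nj nj1 by auto
      have "\<sigma> ! j = Suc (\<rho> ! (j - 2))" "\<sigma> ! k = Suc (\<rho> ! (k - 2))" "\<sigma> ! q = Suc (\<rho> ! (q - 2))"
        using glue_gt[of h _ \<rho>] g o l hm unfolding \<sigma>_def by auto
      note vv = this
      have "P213 h \<rho>" unfolding P213_def
        apply (rule exI[of _ "j - 2"], rule exI[of _ "k - 2"], rule exI[of _ "q - 2"])
        using vv g o l sh A by (auto; linarith)
      then show ?thesis by blast
    next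
      case B
      then have g: "i < h" "j < h" "k < h" using o nj by auto
      have "\<sigma> ! i = Suc (\<rho> ! i)" "\<sigma> ! j = Suc (\<rho> ! j)" "\<sigma> ! k = Suc (\<rho> ! k)"
        using glue_lt[of _ h \<rho>] g l hm unfolding \<sigma>_def by auto
      note vv = this
      have "P132 h \<rho>" unfolding P132_def
        apply (rule exI[of _ i], rule exI[of _ j], rule exI[of _ k])
        using vv g o by auto
      then show ?thesis by blast
    next
      case C
      have q1: "q \<noteq> Suc h" "i \<noteq> h" using C by auto
      have x: "\<sigma>!i = Suc (\<rho> ! e i)" "\<sigma>!j = Suc (\<rho> ! e j)" "\<sigma>!k = Suc (\<rho> ! e k)" "\<sigma>!q = Suc (\<rho> ! e q)" "e q < m"
        using sd o nj nj1 q1 by auto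
      have y: "e i < e j" "e j < e k" "e k < e q" using emono o nj nj1 q1 by auto
      have "c1324 \<rho>" unfolding c1324_def
        apply (rule exI[of _ "e i"], rule exI[of _ "e j"], rule exI[of _ "e k"], rule exI[of _ "e q"])
        using x y o l by auto
      then show ?thesis by blast
    qed
  next
    assume "c1324 \<rho> \<or> P132 h \<rho> \<or> P213 h \<rho>"
    then consider (A) "c1324 \<rho>" | (B) "P132 h \<rho>" | (C) "P213 h \<rho>" by blast
    then show "c1324 (glue h \<rho>)"
    proof cases
      case A
      then obtain a b c d where o: "a < b" "b < c" "c < d" "d < m" "\<rho>!a < \<rho>!c" "\<rho>!c < \<rho>!b" "\<rho>!b < \<rho>!d"
        unfolding c1324_def l by blast
      define f where "f x = (if x < h then x else x + 2)" for x
      have fv: "\<sigma> ! f x = Suc (\<rho> ! x)" if "x < m" for x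
        unfolding f_def \<sigma>_def using glue_lt[of x h \<rho>] glue_gt[of h "x+2" \<rho>] that l hm by auto
      have fm: "f x < f y" if "x < y" for x y unfolding f_def using that by auto
      have fd: "f d < m + 2" unfolding f_def using o hm by auto
      show ?thesis unfolding \<sigma>_def[symmetric] c1324_def
        apply (rule exI[of _ "f a"], rule exI[of _ "f b"], rule exI[of _ "f c"], rule exI[of _ "f d"])
        using o fv fm ls fd by auto
    next
      case B
      then obtain a b c where o: "a < b" "b < c" "c < h" "\<rho> ! a < \<rho> ! c" "\<rho> ! c < \<rho> ! b"
        unfolding P132_def by blast
      have v: "\<sigma>!a = Suc (\<rho>!a)" "\<sigma>!b = Suc (\<rho>!b)" "\<sigma>!c = Suc (\<rho>!c)"
        using glue_lt[of _ h \<rho>] o l hm unfolding \<sigma>_def by auto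
      have bm: "\<rho> ! b \<le> m" using bnd o hm by auto
      show ?thesis unfolding \<sigma>_def[symmetric] c1324_def
        apply (rule exI[of _ a], rule exI[of _ b], rule exI[of _ c], rule exI[of _ "Suc h"])
        using o v sh1 ls hm bm by auto
    next
      case C
      then obtain a b c where o: "h \<le> a" "a < b" "b < c" "c < m" "\<rho> ! b < \<rho> ! a" "\<rho> ! a < \<rho> ! c"
        unfolding P213_def l by blast
      have v: "\<sigma>!(a+2) = Suc (\<rho>!a)" "\<sigma>!(b+2) = Suc (\<rho>!b)" "\<sigma>!(c+2) = Suc (\<rho>!c)"
        using glue_gt[of h _ \<rho>] o l hm unfolding \<sigma>_def by auto
      show ?thesis unfolding \<sigma>_def[symmetric] c1324_def
        apply (rule exI[of _ h], rule exI[of _ "a+2"], rule exI[of _ "b+2"], rule exI[of _ "c+2"])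
        using o v sh ls bnd[of b] by auto
    qed
  qed
qed



lemma take_glue: "h \<le> length \<rho> \<Longrightarrow> take h (glue h \<rho>) = map Suc (take h \<rho>)"
  by (simp add: glue_def)
lemma drop_glue: "h \<le> length \<rho> \<Longrightarrow> drop (Suc (Suc h)) (glue h \<rho>) = map Suc (drop h \<rho>)"
  by (simp add: glue_def)

lemma glue_inj:
  assumes p: "\<rho> \<in> perms m" and p': "\<rho>' \<in> perms m" and hm: "h \<le> m" and hm': "h' \<le> m"
    and eq: "glue h \<rho> = glue h' \<rho>'"
  shows "h = h' \<and> \<rho> = \<rho>'"
proof -
  have l: "length \<rho> = m" "length \<rho>' = m" using perms_length p p' by auto
  have gp: "glue h \<rho> \<in> perms (Suc (Suc m))" by (rule glue_perm[OF p hm])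
  have d: "distinct (glue h \<rho>)" using gp by (simp add: perms_def)
  have lg: "length (glue h \<rho>) = m + 2" using l hm by simp
  have "glue h \<rho> ! h = 1" "glue h \<rho> ! h' = 1"
    using glue_h[of h \<rho>] glue_h[of h' \<rho>'] l hm hm' eq by auto
  moreover have "h < length (glue h \<rho>)" "h' < length (glue h \<rho>)" using lg hm hm' by auto
  ultimately have hh: "h = h'" using nth_eq_iff_index_eq[OF d, of h h'] by simp
  have t: "map Suc (take h \<rho>) = map Suc (take h \<rho>')"
    using take_glue[of h \<rho>] take_glue[of h \<rho>'] l hm eq hh by simp
  have dr: "map Suc (drop h \<rho>) = map Suc (drop h \<rho>')"
    using drop_glue[of h \<rho>] drop_glue[of h \<rho>'] l hm eq hh by simp
  have "take h \<rho> = take h \<rho>'" "drop h \<rho> = drop h \<rho>'"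
    using t dr by (simp_all add: inj_map_eq_map)
  then have "\<rho> = \<rho>'" by (metis append_take_drop_id)
  then show ?thesis using hh by simp
qed

lemma glue_surj:
  assumes p: "\<sigma> \<in> perms (Suc (Suc m))" and i: "Suc i < length \<sigma>" and s1: "\<sigma> ! i = 1"
    and s2: "\<sigma> ! Suc i = Suc (Suc m)"
  shows "\<exists>\<rho>. \<rho> \<in> perms m \<and> i \<le> m \<and> glue i \<rho> = \<sigma>"
proof -
  have l: "length \<sigma> = Suc (Suc m)" using perms_length[OF p] .
  have d: "distinct \<sigma>" and s: "set \<sigma> = {1..Suc (Suc m)}" using p by (auto simp: perms_def)
  define A where "A = take i \<sigma>"
  define B where "B = drop (Suc (Suc i)) \<sigma>"
  have dec: "\<sigma> = A @ [1, Suc (Suc m)] @ B"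
  proof -
    have "\<sigma> = take i \<sigma> @ \<sigma> ! i # drop (Suc i) \<sigma>" using i by (simp add: id_take_nth_drop)
    also have "drop (Suc i) \<sigma> = \<sigma> ! Suc i # drop (Suc (Suc i)) \<sigma>" using i by (simp add: Cons_nth_drop_Suc)
    finally show ?thesis using s1 s2 unfolding A_def B_def by simp
  qed
  have lA: "length A = i" unfolding A_def using i by simp
  have "length \<sigma> = length A + 2 + length B" using dec by simp
  then have lAB: "length (A @ B) = m" using l by simp
  have dd: "distinct (A @ [1, Suc (Suc m)] @ B)" using d dec by simp
  then have dAB: "distinct (A @ B)" and n1: "1 \<notin> set (A @ B)" and n2: "Suc (Suc m) \<notin> set (A @ B)"
    by auto
  have sAB: "set (A @ B) = {2..Suc m}"
  proof -
    have E: "set (A @ B) \<union> {1, Suc (Suc m)} = {1..Suc (Suc m)}" using s dec by auto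
    show ?thesis
    proof (rule set_eqI)
      fix x
      have "x \<in> set (A @ B) \<longleftrightarrow> x \<in> {1..Suc (Suc m)} \<and> x \<noteq> 1 \<and> x \<noteq> Suc (Suc m)"
        using E n1 n2 by blast
      then show "x \<in> set (A @ B) \<longleftrightarrow> x \<in> {2..Suc m}" by auto
    qed
  qed
  define \<rho> where "\<rho> = map (\<lambda>x. x - 1) (A @ B)"
  have inj: "inj_on (\<lambda>x. x - 1) (set (A @ B))" using sAB by (auto simp: inj_on_def)
  have "distinct \<rho>" unfolding \<rho>_def using distinct_map[THEN iffD2, OF conjI[OF dAB inj]] .
  moreover have "set \<rho> = {1..m}"
  proof -
    have "set \<rho> = (\<lambda>x. x - 1) ` {2..Suc m}" unfolding \<rho>_def set_map sAB[symmetric] ..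
    also have "\<dots> = {1..m}"
    proof
      show "(\<lambda>x. x - 1) ` {2..Suc m} \<subseteq> {1..m}" by auto
      show "{1..m} \<subseteq> (\<lambda>x. x - 1) ` {2..Suc m}"
      proof
        fix y assume "y \<in> {1..m}"
        then have "Suc y \<in> {2..Suc m}" "y = Suc y - 1" by auto
        then show "y \<in> (\<lambda>x. x - 1) ` {2..Suc m}" by blast
      qed
    qed
    finally show ?thesis .
  qed
  ultimately have pr: "\<rho> \<in> perms m" by (simp add: perms_def)
  have lr: "length \<rho> = m" unfolding \<rho>_def using lAB by simp
  have im: "i \<le> m" using lA lAB by simp
  have pos: "\<forall>x\<in>set (A @ B). 1 \<le> x" using sAB by auto
  have tA: "map Suc (take i \<rho>) = A"
  proof -
    have "take i \<rho> = map (\<lambda>x. x - 1) A" unfolding \<rho>_def using lA by simp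
    moreover have "Suc (x - 1) = x" if "x \<in> set (A @ B)" for x using pos that by fastforce
    ultimately show ?thesis by (auto intro!: map_idI)
  qed
  have dB: "map Suc (drop i \<rho>) = B"
  proof -
    have "drop i \<rho> = map (\<lambda>x. x - 1) B" unfolding \<rho>_def using lA by simp
    moreover have "Suc (x - 1) = x" if "x \<in> set (A @ B)" for x using pos that by fastforce
    ultimately show ?thesis by (auto intro!: map_idI)
  qed
  have "glue i \<rho> = \<sigma>" unfolding glue_def tA dB lr using dec by simp
  then show ?thesis using pr im by blast
qed



lemma D_glue:
  "(\<pi>, h) \<in> dominoes m \<longleftrightarrow> \<pi> \<in> perms m \<and> h \<le> m \<and> \<not> c1324 (glue h (invl \<pi>))"
proof (cases "\<pi> \<in> perms m \<and> h \<le> m")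
  case True
  then have p: "\<pi> \<in> perms m" and hm: "h \<le> m" by auto
  have pr: "invl \<pi> \<in> perms m" using invl_perm[OF p] .
  have lr: "length (invl \<pi>) = m" using perms_length[OF pr] .
  have "c1324 (glue h (invl \<pi>)) \<longleftrightarrow> c1324 \<pi> \<or> c132 (\<lambda>v. v \<le> h) \<pi> \<or> c213 (\<lambda>v. h < v) \<pi>"
    unfolding glue_c1324[OF pr hm] c1324_invl_iff[OF p] bot_iff[OF p hm] top_iff[OF p hm]
      P132_def P213_def lr ..
  then show ?thesis unfolding dominoes_alt using True by auto
next
  case False
  then show ?thesis unfolding dominoes_alt by auto
qed

lemma main_bij:
  "bij_betw (\<lambda>(\<pi>, h). glue h (invl \<pi>)) (dominoes m) (S_prec (Suc (Suc m)) 1 1)"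
proof (rule bij_betw_imageI)
  show "inj_on (\<lambda>(\<pi>, h). glue h (invl \<pi>)) (dominoes m)"
  proof (rule inj_onI, clarify)
    fix \<pi> h \<pi>' h'
    assume a: "(\<pi>, h) \<in> dominoes m" "(\<pi>', h') \<in> dominoes m" "glue h (invl \<pi>) = glue h' (invl \<pi>')"
    then have p: "\<pi> \<in> perms m" "h \<le> m" "\<pi>' \<in> perms m" "h' \<le> m" using D_glue by auto
    have "h = h' \<and> invl \<pi> = invl \<pi>'"
      using glue_inj[OF invl_perm[OF p(1)] invl_perm[OF p(3)] p(2) p(4) a(3)] .
    then show "\<pi> = \<pi>' \<and> h = h'" using invl_invl[OF p(1)] invl_invl[OF p(3)] by metis
  qed
next
  show "(\<lambda>(\<pi>, h). glue h (invl \<pi>)) ` dominoes m = S_prec (Suc (Suc m)) 1 1"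
  proof
    show "(\<lambda>(\<pi>, h). glue h (invl \<pi>)) ` dominoes m \<subseteq> S_prec (Suc (Suc m)) 1 1"
    proof clarify
      fix \<pi> h assume "(\<pi>, h) \<in> dominoes m"
      then have p: "\<pi> \<in> perms m" and hm: "h \<le> m" and nc: "\<not> c1324 (glue h (invl \<pi>))"
        using D_glue by auto
      have pr: "invl \<pi> \<in> perms m" using invl_perm[OF p] .
      have lr: "length (invl \<pi>) = m" using perms_length[OF pr] .
      have "glue h (invl \<pi>) \<in> perms (Suc (Suc m))" using glue_perm[OF pr hm] .
      moreover have "glue h (invl \<pi>) ! h = 1" using glue_h[of h "invl \<pi>"] hm lr by simp
      moreover have "glue h (invl \<pi>) ! (h + 1) = Suc (Suc m)" using glue_h1[of h "invl \<pi>"] hm lr by simp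
      moreover have "h + 1 < length (glue h (invl \<pi>))" using hm lr by simp
      ultimately show "glue h (invl \<pi>) \<in> S_prec (Suc (Suc m)) 1 1"
        unfolding S_alt using nc by blast
    qed
  next
    show "S_prec (Suc (Suc m)) 1 1 \<subseteq> (\<lambda>(\<pi>, h). glue h (invl \<pi>)) ` dominoes m"
    proof
      fix \<sigma> assume "\<sigma> \<in> S_prec (Suc (Suc m)) 1 1"
      then obtain i where p: "\<sigma> \<in> perms (Suc (Suc m))" and nc: "\<not> c1324 \<sigma>"
        and i: "Suc i < length \<sigma>" "\<sigma> ! i = 1" "\<sigma> ! Suc i = Suc (Suc m)"
        unfolding S_alt by auto
      obtain \<rho> where r: "\<rho> \<in> perms m" "i \<le> m" "glue i \<rho> = \<sigma>"
        using glue_surj[OF p i] by blast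
      have ii: "invl (invl \<rho>) = \<rho>" using invl_invl[OF r(1)] .
      have "(invl \<rho>, i) \<in> dominoes m"
        unfolding D_glue ii using invl_perm[OF r(1)] r nc by simp
      moreover have "\<sigma> = (\<lambda>(\<pi>, h). glue h (invl \<pi>)) (invl \<rho>, i)" using ii r by simp
      ultimately show "\<sigma> \<in> (\<lambda>(\<pi>, h). glue h (invl \<pi>)) ` dominoes m" by blast
    qed
  qed
qed

theorem proposition2p1:
  fixes n :: nat
  assumes "n \<ge> 2"
  shows "(\<exists>f. bij_betw f (S_prec n 1 1) (dominoes (n - 2))) \<and>
         card (S_prec n 1 1) = card (dominoes (n - 2))"
proof -
  obtain m where n: "n = Suc (Suc m)" using assms by (metis add_2_eq_Suc le_Suc_ex)
  have b: "bij_betw (\<lambda>(\<pi>, h). glue h (invl \<pi>)) (dominoes (n - 2)) (S_prec n 1 1)"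
    using main_bij[of m] n by simp
  show ?thesis using bij_betw_inv_into[OF b] bij_betw_same_card[OF b] by auto
qed


end
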